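(* For every integer $d\ge 3$, the space $\mathcal O_d$ is homotopy equivalent to the $2$-sphere $S^2$.
   Context: A polynomial map is a map $\phi:\mathbb R\to\mathbb R^3$ whose three component functions are real polynomials. A polynomial knot is a polynomial map which is a smooth embedding, i.e. $\phi$ is injective and $\phi'(t)\neq 0$ for all $t\in\mathbb R$. For an integer $d\ge 2$, $\mathcal A_d$ denotes the set of polynomial maps $t\mapsto (f(t),g(t),h(t))$ with $\deg f\le d-2$, $\deg g\le d-1$, $\deg h\le d$ (the zero polynomial is allowed and has degree $-\infty$). Writing $f(t)=\sum_{i=0}^{d-2}a_it^i$, $g(t)=\sum_{i=0}^{d-1}b_it^i$, $h(t)=\sum_{i=0}^{d}c_it^i$, the map $\eta:\mathcal A_d\to\mathbb R^{3d}$, $(f,g,h)\mapsto(a_0,\dots,a_{d-2},b_0,\dots,b_{d-1},c_0,\dots,c_d)$ is a bijection; $\mathcal A_d$ carries the metric $\rho(\phi,\psi)=\|\eta(\phi)-\eta(\psi)\|$ (Euclidean norm), so that $\eta$ is a homeomorphism, and all subsets of $\mathcal A_d$ carry the subspace topology. $\mathcal O_d$ is the set of all polynomial knots belonging to $\mathcal A_d$. *)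

theory Defs
  imports "HOL-Analysis.Analysis" "HOL-Computational_Algebra.Polynomial"
begin

type_synonym pmap = "real poly \<times> real poly \<times> real poly"

definition pcurve :: "pmap \<Rightarrow> real \<Rightarrow> real \<times> real \<times> real" where
  "pcurve \<phi> = (case \<phi> of (f, g, h) \<Rightarrow> (\<lambda>t. (poly f t, poly g t, poly h t)))"

definition A :: "nat \<Rightarrow> pmap set" where
  "A d = {(f, g, h). degree f \<le> d - 2 \<and> degree g \<le> d - 1 \<and> degree h \<le> d}"

definition rho :: "nat \<Rightarrow> pmap \<Rightarrow> pmap \<Rightarrow> real" where
  "rho d \<phi> \<psi> = (case \<phi> of (f, g, h) \<Rightarrow> case \<psi> of (f', g', h') \<Rightarrow>
     sqrt ((\<Sum>i\<le>d - 2. (coeff f i - coeff f' i)\<^sup>2)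
         + (\<Sum>i\<le>d - 1. (coeff g i - coeff g' i)\<^sup>2)
         + (\<Sum>i\<le>d. (coeff h i - coeff h' i)\<^sup>2)))"

definition A_top :: "nat \<Rightarrow> pmap topology" where
  "A_top d = Metric_space.mtopology (A d) (rho d)"

definition poly_knot :: "pmap \<Rightarrow> bool" where
  "poly_knot \<phi> \<longleftrightarrow> inj (pcurve \<phi>) \<and>
     (case \<phi> of (f, g, h) \<Rightarrow>
        (\<forall>t. (poly (pderiv f) t, poly (pderiv g) t, poly (pderiv h) t) \<noteq> (0, 0, 0)))"

definition Ospace :: "nat \<Rightarrow> pmap set" where
  "Ospace d = {\<phi> \<in> A d. poly_knot \<phi>}"

end

theory Submission
  imports Defs
begin

definition cvec :: "pmap \<Rightarrow> nat \<times> nat \<Rightarrow> real" where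
  "cvec \<phi> = (\<lambda>(k,i). case \<phi> of (f,g,h) \<Rightarrow>
     if k = 0 then coeff f i else if k = 1 then coeff g i else if k = 2 then coeff h i else 0)"

definition Iset :: "nat \<Rightarrow> (nat \<times> nat) set" where
  "Iset d = Pair 0 ` {..d-2} \<union> Pair 1 ` {..d-1} \<union> Pair 2 ` {..d}"

lemma finite_Iset: "finite (Iset d)"
  by (simp add: Iset_def)

lemma rho_L2: "rho d \<phi> \<psi> = L2_set (\<lambda>j. cvec \<phi> j - cvec \<psi> j) (Iset d)"
proof -
  obtain f g h where p: "\<phi> = (f,g,h)" by (cases \<phi>) auto
  obtain f' g' h' where q: "\<psi> = (f',g',h')" by (cases \<psi>) auto
  have d1: "(Pair 0 ` {..d-2} \<union> Pair 1 ` {..d-1}) \<inter> Pair (2::nat) ` {..d} = {}" by auto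
  have d2: "Pair (0::nat) ` {..d-2} \<inter> Pair 1 ` {..d-1} = {}" by auto
  have "(\<Sum>j\<in>Iset d. (cvec \<phi> j - cvec \<psi> j)\<^sup>2) =
     (\<Sum>i\<le>d - 2. (coeff f i - coeff f' i)\<^sup>2)
         + (\<Sum>i\<le>d - 1. (coeff g i - coeff g' i)\<^sup>2)
         + (\<Sum>i\<le>d. (coeff h i - coeff h' i)\<^sup>2)"
    unfolding Iset_def
    apply (subst sum.union_disjoint[OF _ _ d1], simp, simp)
    apply (subst sum.union_disjoint[OF _ _ d2], simp, simp)
    apply (subst sum.reindex, simp add: inj_on_def)+
    apply (simp add: cvec_def p q)
    done
  then show ?thesis by (simp add: L2_set_def rho_def p q)
qed

lemma cvec_A_eq:
  assumes "\<phi> \<in> A d" "\<psi> \<in> A d" "\<forall>j\<in>Iset d. cvec \<phi> j = cvec \<psi> j"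
  shows "\<phi> = \<psi>"
proof -
  obtain f g h where p: "\<phi> = (f,g,h)" by (cases \<phi>) auto
  obtain f' g' h' where q: "\<psi> = (f',g',h')" by (cases \<psi>) auto
  have dg: "degree f \<le> d-2" "degree g \<le> d-1" "degree h \<le> d"
           "degree f' \<le> d-2" "degree g' \<le> d-1" "degree h' \<le> d"
    using assms(1,2) by (auto simp: A_def p q)
  have "coeff f i = coeff f' i" for i
  proof (cases "i \<le> d-2")
    case True
    then have "(0,i) \<in> Iset d" by (auto simp: Iset_def)
    then show ?thesis using assms(3) by (auto simp: cvec_def p q)
  next
    case False
    then show ?thesis using dg by (simp add: coeff_eq_0)
  qed
  moreover have "coeff g i = coeff g' i" for i
  proof (cases "i \<le> d-1")
    case True
    then have "(1,i) \<in> Iset d" by (auto simp: Iset_def)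
    then show ?thesis using assms(3) by (auto simp: cvec_def p q)
  next
    case False
    then show ?thesis using dg by (simp add: coeff_eq_0)
  qed
  moreover have "coeff h i = coeff h' i" for i
  proof (cases "i \<le> d")
    case True
    then have "(2,i) \<in> Iset d" by (auto simp: Iset_def)
    then show ?thesis using assms(3) by (auto simp: cvec_def p q)
  next
    case False
    then show ?thesis using dg by (simp add: coeff_eq_0)
  qed
  ultimately show ?thesis by (simp add: p q poly_eqI)
qed

lemma Metric_rho: "Metric_space (A d) (rho d)"
proof
  fix x y z
  show "0 \<le> rho d x y" by (simp add: rho_L2)
  show "rho d x y = rho d y x"
    unfolding rho_L2 L2_set_def by (simp add: power2_commute)
  show "x \<in> A d \<Longrightarrow> y \<in> A d \<Longrightarrow> rho d x y = 0 \<longleftrightarrow> x = y"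
  proof -
    assume xy: "x \<in> A d" "y \<in> A d"
    have "rho d x y = 0 \<longleftrightarrow> (\<forall>j\<in>Iset d. cvec x j - cvec y j = 0)"
      unfolding rho_L2 by (rule L2_set_eq_0_iff[OF finite_Iset])
    then show ?thesis using cvec_A_eq[OF xy] by auto
  qed
  show "rho d x z \<le> rho d x y + rho d y z"
    unfolding rho_L2
    using L2_set_triangle_ineq[of "\<lambda>j. cvec x j - cvec y j" "\<lambda>j. cvec y j - cvec z j" "Iset d"]
    by simp
qed

lemma topspace_A: "topspace (A_top d) = A d"
  by (simp add: A_top_def Metric_space.topspace_mtopology[OF Metric_rho])

lemma topspace_O: "topspace (subtopology (A_top d) (Ospace d)) = Ospace d"
  by (auto simp: topspace_A Ospace_def)


lemma cvec_alt: "cvec \<phi> (k,i) = (if k = 0 then coeff (fst \<phi>) i else if k = 1 then coeff (fst (snd \<phi>)) i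
   else if k = 2 then coeff (snd (snd \<phi>)) i else 0)"
  by (cases \<phi>) (auto simp: cvec_def)

lemma cvec_out: assumes "\<phi> \<in> A d" "j \<notin> Iset d" shows "cvec \<phi> j = 0"
proof -
  obtain f g h where p: "\<phi> = (f,g,h)" by (cases \<phi>) auto
  obtain k i where j: "j = (k,i)" by (cases j) auto
  have dg: "degree f \<le> d-2" "degree g \<le> d-1" "degree h \<le> d"
    using assms(1) by (auto simp: A_def p)
  have m: "(a,b) \<in> Pair a ` S \<longleftrightarrow> b \<in> S" for a b and S :: "nat set" by auto
  show ?thesis using assms(2) dg unfolding j p cvec_def Iset_def
    by (auto simp: coeff_eq_0 m)
qed

lemma cvec_lip: assumes "j \<in> Iset d" shows "\<bar>cvec \<phi> j - cvec \<psi> j\<bar> \<le> rho d \<phi> \<psi>"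
proof -
  have "\<bar>cvec \<phi> j - cvec \<psi> j\<bar> \<le> L2_set (\<lambda>j. \<bar>cvec \<phi> j - cvec \<psi> j\<bar>) (Iset d)"
    by (rule member_le_L2_set[OF finite_Iset assms])
  also have "\<dots> = rho d \<phi> \<psi>" unfolding rho_L2 L2_set_def by simp
  finally show ?thesis .
qed

lemma cont_cvec: "continuous_map (A_top d) euclideanreal (\<lambda>\<phi>. cvec \<phi> j)"
proof (cases "j \<in> Iset d")
  case True
  show ?thesis unfolding A_top_def Metric_space.continuous_map_from_metric[OF Metric_rho]
  proof (intro conjI ballI allI impI)
    fix a U assume a: "a \<in> A d" and U: "openin euclideanreal U \<and> cvec a j \<in> U"
    then obtain e where e: "e > 0" "\<And>y. \<bar>y - cvec a j\<bar> < e \<Longrightarrow> y \<in> U"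
      using open_real by (metis open_openin)
    show "\<exists>r>0. \<forall>x. x \<in> A d \<and> rho d a x < r \<longrightarrow> cvec x j \<in> U"
    proof (intro exI[of _ e] conjI allI impI)
      fix x assume "x \<in> A d \<and> rho d a x < e"
      then show "cvec x j \<in> U" using cvec_lip[OF True, of x a] e
        by (metis Metric_space.commute Metric_rho le_less_trans)
    qed (use e in auto)
  qed auto
next
  case False
  show ?thesis
    by (rule continuous_map_eq[of _ _ "\<lambda>_. 0"]) (auto simp: topspace_A cvec_out[OF _ False])
qed

lemma cont_coeffs:
  "continuous_map (A_top d) euclideanreal (\<lambda>\<phi>. coeff (fst \<phi>) i)"
  "continuous_map (A_top d) euclideanreal (\<lambda>\<phi>. coeff (fst (snd \<phi>)) i)"
  "continuous_map (A_top d) euclideanreal (\<lambda>\<phi>. coeff (snd (snd \<phi>)) i)"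
  using cont_cvec[of d "(0,i)"] cont_cvec[of d "(1,i)"] cont_cvec[of d "(2,i)"]
  by (simp_all add: cvec_alt)

lemma cont_into:
  assumes inA: "\<And>x. x \<in> topspace X \<Longrightarrow> f x \<in> A d"
    and c1: "\<And>i. continuous_map X euclideanreal (\<lambda>x. coeff (fst (f x)) i)"
    and c2: "\<And>i. continuous_map X euclideanreal (\<lambda>x. coeff (fst (snd (f x))) i)"
    and c3: "\<And>i. continuous_map X euclideanreal (\<lambda>x. coeff (snd (snd (f x))) i)"
  shows "continuous_map X (A_top d) f"
proof -
  have cv: "continuous_map X euclideanreal (\<lambda>x. cvec (f x) j)" for j
    using c1 c2 c3 by (cases j) (auto simp: cvec_alt)
  show ?thesis
  unfolding A_top_def Metric_space.continuous_map_to_metric[OF Metric_rho]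
  proof (intro ballI allI impI)
    fix x and e :: real assume x: "x \<in> topspace X" and e: "e > 0"
    have cr: "continuous_map X euclideanreal (\<lambda>y. rho d (f x) (f y))"
      unfolding rho_L2 L2_set_def
      by (intro continuous_intros cv finite_Iset)
    let ?U = "{y \<in> topspace X. rho d (f x) (f y) \<in> {..<e}}"
    have "openin X ?U"
      by (rule openin_continuous_map_preimage[OF cr]) simp
    moreover have "x \<in> ?U" using x e Metric_space.zero[OF Metric_rho, of "f x" d "f x"] inA[OF x] by simp
    moreover have "\<forall>y\<in>?U. f y \<in> Metric_space.mball (A d) (rho d) (f x) e"
      using inA x by (auto simp: Metric_space.in_mball[OF Metric_rho])
    ultimately show "\<exists>U. openin X U \<and> x \<in> U \<and> (\<forall>y\<in>U. f y \<in> Metric_space.mball (A d) (rho d) (f x) e)"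
      by blast
  qed
qed


definition pm :: "(nat \<Rightarrow> real) \<Rightarrow> real poly \<Rightarrow> real poly" where
  "pm w p = (\<Sum>i\<le>degree p. monom (w i * coeff p i) i)"

lemma coeff_pm [simp]: "coeff (pm w p) n = w n * coeff p n"
  by (auto simp: pm_def coeff_sum coeff_monom coeff_eq_0 not_le)

lemma degree_pm: "degree (pm w p) \<le> degree p"
  by (rule degree_le) (simp add: coeff_eq_0)

lemma poly_pm: "poly (pm w p) t = (\<Sum>i\<le>degree p. w i * coeff p i * t^i)"
  by (simp add: pm_def poly_sum poly_monom)

lemma poly_pm_geom: "poly (pm (\<lambda>i. c * s^i) p) t = c * poly p (s*t)"
  unfolding poly_pm poly_altdef[of p "s*t"]
  by (simp add: sum_distrib_left power_mult_distrib mult_ac)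

definition wt :: "real \<Rightarrow> real \<Rightarrow> nat \<Rightarrow> real" where
  "wt s \<mu> i = (if i = 0 then s else \<mu> * s^(i-1))"

lemma pderiv_pm: "pderiv (pm (wt s \<mu>) p) = pm (\<lambda>i. \<mu> * s^i) (pderiv p)"
  by (rule poly_eqI) (simp add: coeff_pderiv wt_def)

lemma pm_pos: assumes "s > 0"
  shows "pm (wt s \<mu>) p = pm (\<lambda>i. \<mu>/s * s^i) p + [:s * coeff p 0 - \<mu>/s * coeff p 0:]"
proof (rule poly_eqI)
  fix n show "coeff (pm (wt s \<mu>) p) n = coeff (pm (\<lambda>i. \<mu> / s * s ^ i) p + [:s * coeff p 0 - \<mu> / s * coeff p 0:]) n"
    using assms by (cases n) (auto simp: wt_def coeff_pCons)
qed

lemma poly_pm_pos: assumes "s > 0"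
  shows "poly (pm (wt s \<mu>) p) t = \<mu>/s * poly p (s*t) + (s * coeff p 0 - \<mu>/s * coeff p 0)"
  unfolding pm_pos[OF assms] poly_add poly_pm_geom by simp

lemma pm_zero: "pm (wt 0 \<mu>) p = [:0, \<mu> * coeff p 1:]"
proof (rule poly_eqI)
  fix n show "coeff (pm (wt 0 \<mu>) p) n = coeff [:0, \<mu> * coeff p 1:] n"
    by (cases n) (auto simp: wt_def coeff_pCons split: nat.split)
qed

lemma pm_one: "pm (wt 1 1) p = p"
  by (rule poly_eqI) (simp add: wt_def)

lemma poly_pderiv0: "poly (pderiv p) 0 = coeff p 1"
  by (simp add: poly_0_coeff_0 coeff_pderiv)

lemma lin_knot: assumes "(a,b,c) \<noteq> ((0::real),(0::real),(0::real))"
  shows "poly_knot ([:0,a:],[:0,b:],[:0,c:])"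
  using assms by (auto simp: poly_knot_def pcurve_def inj_def pderiv_pCons)

lemma knot_H:
  assumes k: "poly_knot (f,g,h)" and s: "0 \<le> s" and mu: "0 < \<mu>"
  shows "poly_knot (pm (wt s \<mu>) f, pm (wt s \<mu>) g, pm (wt s \<mu>) h)"
proof (cases "s = 0")
  case True
  have "(coeff f 1, coeff g 1, coeff h 1) \<noteq> (0,0,0)"
  proof -
    have "(poly (pderiv f) 0, poly (pderiv g) 0, poly (pderiv h) 0) \<noteq> (0,0,0)"
      using k unfolding poly_knot_def by simp
    then show ?thesis unfolding poly_pderiv0 .
  qed
  then have "(\<mu> * coeff f 1, \<mu> * coeff g 1, \<mu> * coeff h 1) \<noteq> (0,0,0)"
    using mu by auto
  then show ?thesis using True by (simp add: pm_zero lin_knot)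
next
  case False
  then have sp: "s > 0" using s by simp
  have inj: "inj (pcurve (f,g,h))" and der: "\<And>t. (poly (pderiv f) t, poly (pderiv g) t, poly (pderiv h) t) \<noteq> (0,0,0)"
    using k by (auto simp: poly_knot_def)
  have "inj (pcurve (pm (wt s \<mu>) f, pm (wt s \<mu>) g, pm (wt s \<mu>) h))"
  proof (rule injI)
    fix x y assume "pcurve (pm (wt s \<mu>) f, pm (wt s \<mu>) g, pm (wt s \<mu>) h) x =
                    pcurve (pm (wt s \<mu>) f, pm (wt s \<mu>) g, pm (wt s \<mu>) h) y"
    then have "poly f (s*x) = poly f (s*y)" "poly g (s*x) = poly g (s*y)" "poly h (s*x) = poly h (s*y)"
      using sp mu by (auto simp: pcurve_def poly_pm_pos)
    then have "pcurve (f,g,h) (s*x) = pcurve (f,g,h) (s*y)" by (simp add: pcurve_def)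
    then have "s*x = s*y" using inj unfolding inj_def by blast
    then show "x = y" using sp by simp
  qed
  moreover have "(poly (pderiv (pm (wt s \<mu>) f)) t, poly (pderiv (pm (wt s \<mu>) g)) t, poly (pderiv (pm (wt s \<mu>) h)) t) \<noteq> (0,0,0)" for t
    using der[of "s*t"] mu by (simp add: pderiv_pm poly_pm_geom)
  ultimately show ?thesis by (simp add: poly_knot_def)
qed


definition Dv :: "pmap \<Rightarrow> real \<times> real \<times> real" where
  "Dv \<phi> = (coeff (fst \<phi>) 1, coeff (fst (snd \<phi>)) 1, coeff (snd (snd \<phi>)) 1)"

definition Nn :: "pmap \<Rightarrow> real" where "Nn \<phi> = norm (Dv \<phi>)"

definition Fm :: "pmap \<Rightarrow> real \<times> real \<times> real" where
  "Fm \<phi> = (coeff (fst \<phi>) 1 / Nn \<phi>, coeff (fst (snd \<phi>)) 1 / Nn \<phi>, coeff (snd (snd \<phi>)) 1 / Nn \<phi>)"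

definition Gm :: "real \<times> real \<times> real \<Rightarrow> pmap" where
  "Gm u = ([:0, fst u:], [:0, fst (snd u):], [:0, snd (snd u):])"

definition mu :: "real \<Rightarrow> pmap \<Rightarrow> real" where "mu s \<phi> = s + (1 - s) / Nn \<phi>"

definition Hm :: "real \<times> pmap \<Rightarrow> pmap" where
  "Hm x = (pm (wt (fst x) (mu (fst x) (snd x))) (fst (snd x)),
           pm (wt (fst x) (mu (fst x) (snd x))) (fst (snd (snd x))),
           pm (wt (fst x) (mu (fst x) (snd x))) (snd (snd (snd x))))"

lemma Nn_pos: assumes "\<phi> \<in> Ospace d" shows "Nn \<phi> > 0"
proof -
  obtain f g h where p: "\<phi> = (f,g,h)" by (cases \<phi>) auto
  have "(poly (pderiv f) 0, poly (pderiv g) 0, poly (pderiv h) 0) \<noteq> (0,0,0)"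
    using assms unfolding Ospace_def poly_knot_def p by simp
  then have "Dv \<phi> \<noteq> 0" unfolding poly_pderiv0 Dv_def p by (simp add: zero_prod_def)
  then show ?thesis by (simp add: Nn_def)
qed

lemma Fm_scale: "Fm \<phi> = (1 / Nn \<phi>) *\<^sub>R Dv \<phi>"
  by (simp add: Fm_def Dv_def)

lemma norm_Fm: assumes "\<phi> \<in> Ospace d" shows "norm (Fm \<phi>) = 1"
  using Nn_pos[OF assms] by (simp add: Fm_scale Nn_def)

lemma cont_triple:
  assumes "continuous_map X euclideanreal a" "continuous_map X euclideanreal b" "continuous_map X euclideanreal c"
  shows "continuous_map X euclidean (\<lambda>x. (a x, b x, c x))"
proof -
  have "continuous_map X (prod_topology euclideanreal (prod_topology euclideanreal euclideanreal)) (\<lambda>x. (a x, b x, c x))"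
    using assms by (intro continuous_map_pairedI)
  then show ?thesis by simp
qed

lemma coeff_lin: "coeff [:0, a:] i = (if i = 1 then a else 0)"
  by (cases i) (auto simp: coeff_pCons split: nat.split)

lemma Gm_O: assumes "d \<ge> 3" "u \<noteq> 0" shows "Gm u \<in> Ospace d"
proof -
  obtain a b c where u: "u = (a,b,c)" by (cases u) auto
  have "degree [:0, x:] \<le> 1" for x :: real by (simp add: degree_pCons_le)
  then have "Gm u \<in> A d" using assms(1) unfolding A_def Gm_def
    by (auto intro: order_trans[of _ 1])
  moreover have "poly_knot (Gm u)" using assms(2) unfolding Gm_def u
    by (intro lin_knot) (simp add: zero_prod_def)
  ultimately show ?thesis by (simp add: Ospace_def)
qed

theorem mainTheorem1:
  fixes d :: nat
  assumes "d \<ge> 3"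
  shows "(subtopology (A_top d) (Ospace d)) homotopy_equivalent_space
           (top_of_set (sphere (0 :: real \<times> real \<times> real) 1))"
proof -
  let ?O = "subtopology (A_top d) (Ospace d)"
  let ?S = "top_of_set (sphere (0 :: real \<times> real \<times> real) 1)"
  have ccO: "continuous_map ?O euclideanreal (\<lambda>\<phi>. coeff (fst \<phi>) i)"
     "continuous_map ?O euclideanreal (\<lambda>\<phi>. coeff (fst (snd \<phi>)) i)"
     "continuous_map ?O euclideanreal (\<lambda>\<phi>. coeff (snd (snd \<phi>)) i)" for i
    using cont_coeffs by (auto intro: continuous_map_from_subtopology)
  have cN: "continuous_map ?O euclideanreal Nn"
    unfolding Nn_def Dv_def by (intro continuous_map_norm cont_triple ccO)
  have cF: "continuous_map ?O ?S Fm"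
  proof (rule continuous_map_into_subtopology)
    show "continuous_map ?O euclidean Fm"
      unfolding Fm_def using Nn_pos[of _ d]
      by (intro cont_triple continuous_map_real_divide ccO cN) (force simp: topspace_O)+
    show "Fm \<in> topspace ?O \<rightarrow> sphere 0 1"
      using norm_Fm by (auto simp: topspace_O)
  qed
  have cfst: "continuous_map ?S euclideanreal fst"
      "continuous_map ?S euclideanreal (\<lambda>u. fst (snd u))"
      "continuous_map ?S euclideanreal (\<lambda>u. snd (snd u))"
  proof -
    have c1: "continuous_map (euclidean :: (real \<times> real \<times> real) topology) euclideanreal fst"
      using continuous_map_fst[of "euclideanreal" "euclidean :: (real \<times> real) topology"] by simp
    have c2: "continuous_map (euclidean :: (real \<times> real \<times> real) topology) euclidean snd"
      using continuous_map_snd[of "euclideanreal" "euclidean :: (real \<times> real) topology"] by simp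
    have c3: "continuous_map (euclidean :: (real \<times> real) topology) euclideanreal fst"
      using continuous_map_fst[of "euclideanreal" "euclideanreal"] by simp
    have c4: "continuous_map (euclidean :: (real \<times> real) topology) euclideanreal snd"
      using continuous_map_snd[of "euclideanreal" "euclideanreal"] by simp
    show "continuous_map ?S euclideanreal fst"
      using c1 by (rule continuous_map_from_subtopology)
    show "continuous_map ?S euclideanreal (\<lambda>u. fst (snd u))"
      using continuous_map_compose[OF c2 c3] by (intro continuous_map_from_subtopology) (simp add: o_def)
    show "continuous_map ?S euclideanreal (\<lambda>u. snd (snd u))"
      using continuous_map_compose[OF c2 c4] by (intro continuous_map_from_subtopology) (simp add: o_def)
  qed
  have cG: "continuous_map ?S ?O Gm"
  proof (rule continuous_map_into_subtopology)
    show "continuous_map ?S (A_top d) Gm"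
    proof (rule cont_into)
      show "Gm x \<in> A d" if "x \<in> topspace ?S" for x
      proof -
        have "x \<noteq> 0" using that by auto
        then show ?thesis using Gm_O[OF assms, of x] by (auto simp: Ospace_def)
      qed
    qed (auto simp: Gm_def coeff_lin intro!: continuous_intros)
    show "Gm \<in> topspace ?S \<rightarrow> Ospace d"
    proof
      fix x assume "x \<in> topspace ?S"
      then have "x \<noteq> 0" by auto
      then show "Gm x \<in> Ospace d" using Gm_O[OF assms] by blast
    qed
  qed
  have FG: "homotopic_with (\<lambda>x. True) ?S ?S (Fm \<circ> Gm) id"
  proof (rule homotopic_with_equal)
    show "continuous_map ?S ?S (Fm \<circ> Gm)" using cG cF by (rule continuous_map_compose)
    fix u assume "u \<in> topspace ?S"
    then have "norm u = 1" by simp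
    then show "(Fm \<circ> Gm) u = id u"
      by (cases u) (simp add: Fm_def Gm_def Nn_def Dv_def)
  qed auto
  have GF: "homotopic_with (\<lambda>x. True) ?O ?O (Gm \<circ> Fm) id"
  proof -
    let ?P = "prod_topology (top_of_set {0..1::real}) ?O"
    have tP: "topspace ?P = {0..1} \<times> Ospace d" using topspace_O[of d] by simp
    have cs: "continuous_map ?P euclideanreal fst"
      using continuous_map_fst[of "top_of_set {0..1::real}" ?O]
      by (simp add: continuous_map_in_subtopology)
    have cc: "continuous_map ?P euclideanreal (\<lambda>x. coeff (fst (snd x)) i)"
       "continuous_map ?P euclideanreal (\<lambda>x. coeff (fst (snd (snd x))) i)"
       "continuous_map ?P euclideanreal (\<lambda>x. coeff (snd (snd (snd x))) i)" for i
      using continuous_map_compose[OF continuous_map_snd ccO(1)]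
        continuous_map_compose[OF continuous_map_snd ccO(2)]
        continuous_map_compose[OF continuous_map_snd ccO(3)]
      by (simp_all add: o_def)
    have cNP: "continuous_map ?P euclideanreal (\<lambda>x. Nn (snd x))"
      using continuous_map_compose[OF continuous_map_snd cN] by (simp add: o_def)
    have cmu: "continuous_map ?P euclideanreal (\<lambda>x. mu (fst x) (snd x))"
      unfolding mu_def using Nn_pos[of _ d]
      by (intro continuous_intros cs cNP) (force simp: tP)
    have cw: "continuous_map ?P euclideanreal (\<lambda>x. wt (fst x) (mu (fst x) (snd x)) i)" for i
      unfolding wt_def by (cases "i = 0") (auto intro!: continuous_intros cs cmu)
    have mupos: "mu s \<phi> > 0" if "s \<in> {0..1}" "\<phi> \<in> Ospace d" for s \<phi>
    proof (cases "s = 1")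
      case False
      then have "(1 - s) / Nn \<phi> > 0" using that Nn_pos[OF that(2)] by auto
      then show ?thesis using that by (simp add: mu_def)
    qed (simp add: mu_def)
    have HO: "Hm x \<in> Ospace d" if "x \<in> topspace ?P" for x
    proof -
      obtain s f g h where x: "x = (s,(f,g,h))" by (cases x) auto
      have s: "s \<in> {0..1}" and O: "(f,g,h) \<in> Ospace d" using that by (auto simp: tP x)
      have "(pm (wt s (mu s (f,g,h))) f, pm (wt s (mu s (f,g,h))) g, pm (wt s (mu s (f,g,h))) h) \<in> A d"
        using O degree_pm[of "wt s (mu s (f,g,h))"] unfolding Ospace_def A_def
        by (auto intro: order_trans)
      moreover have "poly_knot (pm (wt s (mu s (f,g,h))) f, pm (wt s (mu s (f,g,h))) g, pm (wt s (mu s (f,g,h))) h)"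
        using O s mupos[OF s O] by (intro knot_H) (auto simp: Ospace_def)
      ultimately show ?thesis by (simp add: Ospace_def Hm_def x)
    qed
    have cH: "continuous_map ?P ?O Hm"
    proof (rule continuous_map_into_subtopology)
      show "continuous_map ?P (A_top d) Hm"
      proof (rule cont_into)
        show "Hm x \<in> A d" if "x \<in> topspace ?P" for x using HO[OF that] by (simp add: Ospace_def)
      qed (auto simp: Hm_def intro!: continuous_map_real_mult cw cc)
      show "Hm \<in> topspace ?P \<rightarrow> Ospace d" using HO by auto
    qed
    show ?thesis
      unfolding homotopic_with[where P="\<lambda>x. True", simplified]
    proof (intro exI conjI ballI)
      show "continuous_map ?P ?O Hm" by (rule cH)
      fix \<phi> assume "\<phi> \<in> topspace ?O"
      then have O: "\<phi> \<in> Ospace d" by (simp add: topspace_O)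
      show "Hm (0, \<phi>) = (Gm \<circ> Fm) \<phi>"
        by (simp add: Hm_def Gm_def Fm_def pm_zero mu_def)
      show "Hm (1, \<phi>) = id \<phi>"
        by (cases \<phi>) (simp add: Hm_def mu_def pm_one)
    qed
  qed
  show ?thesis unfolding homotopy_equivalent_space_def
    using cF cG FG GF by blast
qed

end
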